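(* Assume that $\sigma>0$ and $d>0$. For any $\varepsilon\in(0,1)$ and $c\in(0,\infty)$, let $$L:=\sigma^2+2\int_{[-\varepsilon,0)}z^2\nu(dz),\qquad \tau_0:=\frac{c^2}{\big(\nu((-\infty,-\varepsilon))-\sigma^2/2\big)^2}.$$ Then for any $\tau\in(0,\tau_0]$, $$\mathbb{P}\big(X^W_\tau+J^-_\tau\ge c\sqrt\tau\big)\le e^{-Lp^2/2},\qquad\text{where } p=\frac1L\Big[c-\sqrt\tau\Big(\nu((-\infty,-\varepsilon))-\frac{\sigma^2}{2}\Big)\Big]\in[0,\infty).$$
   Context: $X$ is a Lévy process with Lévy triplet $(b,\sigma^2,\nu)$ such that: (i) $\sigma\neq0$, or $\nu((-\infty,0))>0$, or $\int_{(0,1]}z\,\nu(dz)=\infty$; (ii) $\sigma\neq0$, or $\nu((0,\infty))>0$, or $\int_{[-1,0)}|z|\,\nu(dz)=\infty$; (iii) $\int_1^\infty e^z\nu(dz)<\infty$ and $b=-\frac{\sigma^2}{2}-\int_{\mathbb{R}\setminus\{0\}}(e^z-1-z\mathbf 1_{\{|z|\le1\}})\nu(dz)$. Its Lévy–Itô decomposition involves a standard Brownian motion $W$ and an independent Poisson random measure $N(ds,dz)$ with intensity $ds\,\nu(dz)$ and compensated measure $\widetilde N$. Given $r,\delta\ge0$, $d:=r-\delta-\int_{(0,\infty)}(e^z-1)\nu(dz)$. Define $X^W_t:=\sigma W_t-\frac{\sigma^2t}{2}$ and $J^-_t:=\int_0^t\int_{(-\infty,0)}z\,\widetilde N(ds,dz)-t\int_{(-\infty,0)}(e^z-1-z)\nu(dz)$.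 (If $\nu((-\infty,-\varepsilon))=\sigma^2/2$, $\tau_0=\infty$.) *)

theory Defs
  imports "HOL-Probability.Probability"
begin

definition levy_measure :: "real measure \<Rightarrow> bool" where
  "levy_measure \<nu> \<longleftrightarrow> sets \<nu> = sets borel \<and> emeasure \<nu> {0} = 0
     \<and> integrable \<nu> (\<lambda>z. min 1 (z\<^sup>2))"

text \<open>Law at time t of the compensated Poisson integral
  int_0^t int_(-inf,0) z Ntilde(ds,dz), given through its characteristic function
  exp (t * int_(-inf,0) (e^(iuz) - 1 - iuz) nu(dz)).\<close>
definition comp_neg_jump_char :: "real measure \<Rightarrow> real \<Rightarrow> real \<Rightarrow> complex" where
  "comp_neg_jump_char \<nu> t u =
     exp (complex_of_real t *
       set_lebesgue_integral \<nu> {..<0}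
         (\<lambda>z. iexp (u * z) - 1 - \<i> * complex_of_real (u * z)))"

definition bm_marginals :: "'a measure \<Rightarrow> (real \<Rightarrow> 'a \<Rightarrow> real) \<Rightarrow> bool" where
  "bm_marginals M W \<longleftrightarrow> (\<forall>x\<in>space M. W 0 x = 0) \<and>
     (\<forall>t>0. distributed M lborel (W t) (normal_density 0 (sqrt t)))"

end

theory Submission
  imports Defs
begin


lemma poisson_char:
  assumes r: "0 < r"
  shows "(\<integral>k. iexp (u * (a * real k)) \<partial>measure_pmf (poisson_pmf r)) = exp (complex_of_real r * (iexp (u*a) - 1))"
proof -
  let ?f = "\<lambda>k::nat. (r ^ k / fact k * exp (-r)) *\<^sub>R iexp (u * (a * real k))"
  have eq: "?f k = complex_of_real (exp (-r)) * ((complex_of_real r * iexp (u*a)) ^ k /\<^sub>R fact k)" for k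
  proof -
    have "iexp (u * (a * real k)) = (iexp (u*a)) ^ k"
      by (simp add: exp_of_nat_mult[symmetric] algebra_simps)
    then show ?thesis by (simp add: scaleR_conv_of_real power_mult_distrib field_simps)
  qed
  have s: "?f sums (complex_of_real (exp (-r)) * exp (complex_of_real r * iexp (u*a)))"
    unfolding eq by (intro sums_mult exp_converges)
  have int: "integrable (count_space UNIV) ?f"
    unfolding integrable_count_space_nat_iff
  proof -
    have "summable (\<lambda>k. norm (r ^ k /\<^sub>R fact k) * exp (-r))"
      by (intro summable_mult2 summable_norm_exp)
    then show "summable (\<lambda>k. norm (?f k))"
      using r by (simp add: norm_mult divide_inverse abs_mult mult_ac)
  qed
  have "(\<integral>k. iexp (u * (a * real k)) \<partial>measure_pmf (poisson_pmf r)) = (\<integral>k. ?f k \<partial>count_space UNIV)"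
    unfolding measure_pmf_eq_density using r
    by (subst integral_density) (auto simp: pmf_poisson[OF r])
  also have "\<dots> = complex_of_real (exp (-r)) * exp (complex_of_real r * iexp (u*a))"
    using sums_unique[OF s] integral_count_space_nat[OF int] by simp
  also have "\<dots> = exp (complex_of_real r * (iexp (u*a) - 1))"
    by (simp add: exp_diff exp_of_real[symmetric] algebra_simps exp_minus field_simps)
  finally show ?thesis .
qed



lemma poisson_mgf:
  assumes r: "0 < r"
  shows "(\<integral>\<^sup>+k. ennreal (exp (t * (a * real k))) \<partial>measure_pmf (poisson_pmf r)) = ennreal (exp (r * (exp (t*a) - 1)))"
proof -
  let ?f = "\<lambda>k::nat. r ^ k / fact k * exp (-r) * exp (t * (a * real k))"
  have eq: "?f k = exp (-r) * ((r * exp (t*a)) ^ k /\<^sub>R fact k)" for k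
  proof -
    have "exp (t * (a * real k)) = (exp (t*a)) ^ k"
      by (simp add: exp_of_nat_mult[symmetric] algebra_simps)
    then show ?thesis by (simp add: power_mult_distrib field_simps)
  qed
  have s: "?f sums (exp (-r) * exp (r * exp (t*a)))"
    unfolding eq by (intro sums_mult exp_converges)
  have "(\<integral>\<^sup>+k. ennreal (exp (t * (a * real k))) \<partial>measure_pmf (poisson_pmf r)) = (\<Sum>k. ennreal (?f k))"
    unfolding nn_integral_measure_pmf nn_integral_count_space_nat using r
    by (simp add: pmf_poisson[OF r] ennreal_mult'[symmetric])
  also have "\<dots> = ennreal (exp (-r) * exp (r * exp (t*a)))"
    using s r by (subst suminf_ennreal2) (auto simp: sums_iff)
  also have "exp (-r) * exp (r * exp (t*a)) = exp (r * (exp (t*a) - 1))"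
    by (simp add: exp_add[symmetric] algebra_simps)
  finally show ?thesis .
qed

definition cpP :: "nat set \<Rightarrow> (nat \<Rightarrow> real) \<Rightarrow> (nat \<Rightarrow> nat) pmf" where
  "cpP K lam = Pi_pmf K 0 (\<lambda>k. if 0 < lam k then poisson_pmf (lam k) else return_pmf 0)"

definition cpD :: "nat set \<Rightarrow> (nat \<Rightarrow> real) \<Rightarrow> (nat \<Rightarrow> real) \<Rightarrow> real measure" where
  "cpD K a lam = distr (measure_pmf (cpP K lam)) borel
      (\<lambda>f. (\<Sum>k\<in>K. a k * real (f k)) - (\<Sum>k\<in>K. lam k * a k))"

lemma cpD_real_distribution: "real_distribution (cpD K a lam)"
  unfolding cpD_def real_distribution_def real_distribution_axioms_def
  by (auto intro!: prob_space.prob_space_distr prob_space_measure_pmf)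

lemma cpP_component:
  assumes "finite K" "k \<in> K"
  shows "map_pmf (\<lambda>f. f k) (cpP K lam) = (if 0 < lam k then poisson_pmf (lam k) else return_pmf 0)"
  unfolding cpP_def by (subst Pi_pmf_component[OF assms(1)]) (use assms(2) in simp)

lemma cpD_mgf:
  assumes K: "finite K" and lam: "\<And>k. k \<in> K \<Longrightarrow> 0 \<le> lam k"
  shows "(\<integral>\<^sup>+x. ennreal (exp (t * x)) \<partial>cpD K a lam) =
    ennreal (exp (\<Sum>k\<in>K. lam k * (exp (t * a k) - 1 - t * a k)))"
proof -
  let ?p = "\<lambda>k. if 0 < lam k then poisson_pmf (lam k) else return_pmf (0::nat)"
  have "(\<integral>\<^sup>+x. ennreal (exp (t * x)) \<partial>cpD K a lam) =
     (\<integral>\<^sup>+f. ennreal (exp (- t * (\<Sum>k\<in>K. lam k * a k))) * (\<Prod>k\<in>K. ennreal (exp (t * (a k * real (f k))))) \<partial>measure_pmf (cpP K lam))"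
    unfolding cpD_def
    apply (subst nn_integral_distr)
      apply simp apply simp
    apply (intro nn_integral_cong)
    apply (subst prod_ennreal, simp)
    apply (subst ennreal_mult'[symmetric], simp)
    apply (subst exp_sum[OF K, symmetric])
    apply (simp add: exp_add[symmetric] sum_distrib_left algebra_simps sum_subtractf sum_negf)
    done
  also have "\<dots> = ennreal (exp (- t * (\<Sum>k\<in>K. lam k * a k))) *
      (\<Prod>k\<in>K. \<integral>\<^sup>+n. ennreal (exp (t * (a k * real n))) \<partial>measure_pmf (?p k))"
    using nn_integral_prod_Pi_pmf[OF K, of 0 ?p "\<lambda>k n. ennreal (exp (t * (a k * real n)))"]
    by (subst nn_integral_cmult) (auto simp: cpP_def)
  also have "\<dots> = ennreal (exp (- t * (\<Sum>k\<in>K. lam k * a k))) *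
      (\<Prod>k\<in>K. ennreal (exp (lam k * (exp (t * a k) - 1))))"
  proof -
    have "(\<integral>\<^sup>+n. ennreal (exp (t * (a k * real n))) \<partial>measure_pmf (?p k)) = ennreal (exp (lam k * (exp (t * a k) - 1)))"
      if "k \<in> K" for k
      using lam[OF that] by (cases "0 < lam k") (auto simp: poisson_mgf)
    then show ?thesis by (intro arg_cong2[where f="(*)"] prod.cong) auto
  qed
  also have "\<dots> = ennreal (exp (\<Sum>k\<in>K. lam k * (exp (t * a k) - 1 - t * a k)))"
    apply (subst prod_ennreal, simp)
    apply (subst ennreal_mult'[symmetric], simp)
    apply (subst exp_sum[OF K, symmetric])
    apply (simp add: exp_add[symmetric] sum_distrib_left algebra_simps sum_subtractf sum_negf sum.distrib)
    done
  finally show ?thesis .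
qed

lemma cpD_char:
  assumes K: "finite K" and lam: "\<And>k. k \<in> K \<Longrightarrow> 0 \<le> lam k"
  shows "char (cpD K a lam) u =
    exp (\<Sum>k\<in>K. complex_of_real (lam k) * (iexp (u * a k) - 1 - \<i> * complex_of_real (u * a k)))"
proof -
  let ?p = "\<lambda>k. if 0 < lam k then poisson_pmf (lam k) else return_pmf (0::nat)"
  let ?M = "measure_pmf (cpP K lam)"
  let ?X = "\<lambda>k f. a k * real (f k)"
  let ?c = "\<Sum>k\<in>K. lam k * a k"
  interpret M: prob_space ?M by (rule prob_space_measure_pmf)
  have ind: "prob_space.indep_vars ?M (\<lambda>_. borel) ?X K"
    using prob_space.indep_vars_compose2[OF prob_space_measure_pmf indep_vars_Pi_pmf[OF K, of 0 ?p], of "\<lambda>k n. a k * real n" "\<lambda>_. borel"]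
    unfolding cpP_def by simp
  have "char (cpD K a lam) u = (CLINT f|?M. iexp (- u * ?c) * iexp (u * (\<Sum>k\<in>K. ?X k f)))"
    unfolding cpD_def char_def
    by (subst integral_distr) (auto simp: exp_add[symmetric] algebra_simps)
  also have "\<dots> = iexp (- u * ?c) * char (distr ?M borel (\<lambda>f. \<Sum>k\<in>K. ?X k f)) u"
    unfolding char_def by (subst integral_distr) auto
  also have "\<dots> = iexp (- u * ?c) * (\<Prod>k\<in>K. char (distr ?M borel (?X k)) u)"
    by (subst prob_space.char_distr_sum[OF prob_space_measure_pmf ind]) simp
  also have "\<dots> = iexp (- u * ?c) * (\<Prod>k\<in>K. exp (complex_of_real (lam k) * (iexp (u * a k) - 1)))"
  proof -
    have "char (distr ?M borel (?X k)) u = exp (complex_of_real (lam k) * (iexp (u * a k) - 1))"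
      if k: "k \<in> K" for k
    proof -
      have "char (distr ?M borel (?X k)) u = (CLINT f|?M. iexp (u * (a k * real (f k))))"
        unfolding char_def by (subst integral_distr) auto
      also have "\<dots> = (CLINT n|measure_pmf (map_pmf (\<lambda>f. f k) (cpP K lam)). iexp (u * (a k * real n)))"
        by simp
      also have "\<dots> = (CLINT n|measure_pmf (?p k). iexp (u * (a k * real n)))"
        by (simp only: cpP_component[OF K k])
      also have "\<dots> = exp (complex_of_real (lam k) * (iexp (u * a k) - 1))"
        using lam[OF k] poisson_char[of "lam k" u "a k"] by (cases "0 < lam k") auto
      finally show ?thesis .
    qed
    then show ?thesis by (intro arg_cong2[where f="(*)"] prod.cong) auto
  qed
  also have "\<dots> = exp (\<Sum>k\<in>K. complex_of_real (lam k) * (iexp (u * a k) - 1 - \<i> * complex_of_real (u * a k)))"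
    apply (subst exp_sum[OF K, symmetric])
    apply (simp add: exp_add[symmetric] sum_distrib_left algebra_simps sum_subtractf sum_negf sum.distrib)
    done
  finally show ?thesis .
qed



lemma exp_le_quad: assumes "x \<le> (0::real)" shows "exp x \<le> 1 + x + x\<^sup>2 / 2"
proof -
  let ?f = "\<lambda>x::real. 1 + x + x\<^sup>2 / 2 - exp x"
  have d: "\<And>y. (?f has_real_derivative (1 + y - exp y)) (at y)"
    by (auto intro!: derivative_eq_intros simp: power2_eq_square)
  have "?f 0 \<le> ?f x"
    using assms
    by (intro DERIV_nonpos_imp_nonincreasing[of x 0 ?f]) (auto intro!: exI d simp: exp_ge_add_one_self)
  then show ?thesis by simp
qed

lemma iexp_diff_bound1: "cmod (iexp x - 1 - \<i> * complex_of_real x) \<le> x\<^sup>2 / 2"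
  using iexp_approx1[of x 1] by (simp add: power2_eq_square diff_diff_eq)

lemma iexp_diff_bound2: "cmod (iexp x - 1 - \<i> * complex_of_real x) \<le> 2 * \<bar>x\<bar>"
proof -
  have "cmod (iexp x - 1) \<le> \<bar>x\<bar>" using iexp_approx1[of x 0] by simp
  then have "cmod (iexp x - 1 - \<i> * complex_of_real x) \<le> \<bar>x\<bar> + cmod (\<i> * complex_of_real x)"
    using norm_triangle_ineq4[of "iexp x - 1" "\<i> * complex_of_real x"] by linarith
  then show ?thesis by (simp add: norm_mult)
qed



definition fl :: "nat \<Rightarrow> real \<Rightarrow> int" where "fl n z = \<lfloor>- real n * z\<rfloor>"
definition dq :: "nat \<Rightarrow> real \<Rightarrow> real" where "dq n z = - real_of_int (fl n z) / real n"
definition inr :: "nat \<Rightarrow> real \<Rightarrow> bool" where "inr n z \<longleftrightarrow> 1 \<le> fl n z \<and> fl n z < int (n*n)"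
definition gn :: "nat \<Rightarrow> (real \<Rightarrow> 'b::real_vector) \<Rightarrow> real \<Rightarrow> 'b" where
  "gn n g z = (if inr n z then g (dq n z) else 0)"
definition Ik :: "nat \<Rightarrow> nat \<Rightarrow> real set" where "Ik n k = {z. fl n z = int k}"

lemma fl_measurable[measurable]: "fl n \<in> measurable borel (count_space UNIV)"
  unfolding fl_def by measurable

lemma Ik_sets[measurable]: "Ik n k \<in> sets borel"
  unfolding Ik_def by measurable

lemma inr_bounds:
  assumes "inr n z" shows "z \<le> dq n z" "dq n z < 0" "n > 0"
proof -
  have n: "n > 0" using assms by (cases n) (auto simp: inr_def fl_def)
  then show "n > 0" .
  have "real_of_int (fl n z) \<le> - real n * z" unfolding fl_def by linarith
  then show "z \<le> dq n z" using n by (simp add: dq_def field_simps)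
  have "1 \<le> fl n z" using assms by (simp add: inr_def)
  then show "dq n z < 0" using n by (simp add: dq_def field_simps)
qed

lemma gn_sum:
  "gn n g z = (\<Sum>k\<in>{1..<n*n}. indicator (Ik n k) z *\<^sub>R g (- real k / real n))"
proof (cases "inr n z")
  case True
  define k0 where "k0 = nat (fl n z)"
  have k0: "fl n z = int k0" "k0 \<in> {1..<n*n}" using True by (auto simp: k0_def inr_def nat_less_iff)
  have "(\<Sum>k\<in>{1..<n*n}. indicator (Ik n k) z *\<^sub>R g (- real k / real n)) =
        (\<Sum>k\<in>{1..<n*n}. if k = k0 then g (- real k / real n) else 0)"
    by (intro sum.cong) (auto simp: Ik_def k0 indicator_def)
  also have "\<dots> = g (- real k0 / real n)" using k0 by simp
  also have "\<dots> = gn n g z" using True k0 by (simp add: gn_def dq_def)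
  finally show ?thesis by simp
next
  case False
  have "indicator (Ik n k) z = (0::real)" if "k \<in> {1..<n*n}" for k
  proof -
    have "int k < int n * int n" using that by (metis atLeastLessThan_iff of_nat_less_iff of_nat_mult)
    then show ?thesis using that False by (auto simp: Ik_def inr_def indicator_def)
  qed
  then show ?thesis using False by (simp add: gn_def)
qed

lemma Ik_subset: assumes "1 \<le> k" "z \<in> Ik n k" shows "1 \<le> - real n * z"
proof -
  have e: "\<lfloor>- real n * z\<rfloor> = int k" using assms(2) by (simp add: Ik_def fl_def)
  have "real_of_int \<lfloor>- real n * z\<rfloor> \<le> - real n * z" by (rule of_int_floor_le)
  then have "real k \<le> - real n * z" unfolding e by simp
  then show ?thesis using assms(1) by linarith
qed

lemma Ik_finite:
  assumes nu: "sets \<nu> = sets borel" and int: "integrable \<nu> (\<lambda>z. min 1 (z\<^sup>2))" and k: "1 \<le> k"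
  shows "emeasure \<nu> (Ik n k) < \<infinity>"
proof -
  have "integrable \<nu> (indicator (Ik n k) :: real \<Rightarrow> real)"
  proof (rule Bochner_Integration.integrable_bound[OF integrable_mult_right[OF int, of "real n * real n"]])
    show "indicator (Ik n k) \<in> borel_measurable \<nu>" using nu by (simp add: measurable_def)
    show "AE x in \<nu>. norm (indicator (Ik n k) x :: real) \<le> norm (real n * real n * min 1 (x\<^sup>2))"
    proof (intro AE_I2)
      fix x
      show "norm (indicator (Ik n k) x :: real) \<le> norm (real n * real n * min 1 (x\<^sup>2))"
      proof (cases "x \<in> Ik n k")
        case True
        then have h: "1 \<le> - real n * x" using Ik_subset k by blast
        then have "1 \<le> (- real n * x) * (- real n * x)" using mult_mono[of 1 "- real n * x" 1 "- real n * x"] by simp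
        then have "1 \<le> (- real n * x)\<^sup>2" by (simp add: power2_eq_square)
        then have hx: "1 \<le> real n * real n * x\<^sup>2" by (simp add: power2_eq_square algebra_simps)
        have "real n \<ge> 1" using h by (cases n) auto
        then have hn: "1 \<le> real n * real n" using mult_mono[of 1 "real n" 1 "real n"] by simp
        have "1 \<le> real n * real n * min 1 (x\<^sup>2)"
          using hx hn by (cases "x\<^sup>2 \<le> 1") (auto simp: min_def)
        then show ?thesis using True by simp
      qed simp
    qed
  qed
  then show ?thesis using nu by (simp add: integrable_indicator_iff)
qed



lemma gn_integral:
  fixes g :: "real \<Rightarrow> 'b::{banach, second_countable_topology}"
  assumes nu: "sets \<nu> = sets borel" and int: "integrable \<nu> (\<lambda>z. min 1 (z\<^sup>2))"
  shows "integrable \<nu> (gn n g)"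
    and "(\<integral>z. gn n g z \<partial>\<nu>) = (\<Sum>k\<in>{1..<n*n}. measure \<nu> (Ik n k) *\<^sub>R g (- real k / real n))"
proof -
  have eq: "gn n g = (\<lambda>z. \<Sum>k\<in>{1..<n*n}. indicator (Ik n k) z *\<^sub>R g (- real k / real n))"
    by (rule ext) (rule gn_sum)
  have fin: "emeasure \<nu> (Ik n k) < \<infinity>" if "k \<in> {1..<n*n}" for k
    using Ik_finite[OF nu int] that by auto
  have ik: "integrable \<nu> (\<lambda>z. indicator (Ik n k) z *\<^sub>R g (- real k / real n))" if "k \<in> {1..<n*n}" for k
    using fin[OF that] nu by (intro integrable_scaleR_left integrable_real_indicator) (auto simp: sets_eq_imp_space_eq)
  show "integrable \<nu> (gn n g)" unfolding eq using ik by (intro Bochner_Integration.integrable_sum) auto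
  have "(\<integral>z. gn n g z \<partial>\<nu>) = (\<Sum>k\<in>{1..<n*n}. (\<integral>z. indicator (Ik n k) z *\<^sub>R g (- real k / real n) \<partial>\<nu>))"
    unfolding eq using ik by (intro Bochner_Integration.integral_sum) auto
  also have "\<dots> = (\<Sum>k\<in>{1..<n*n}. measure \<nu> (Ik n k) *\<^sub>R g (- real k / real n))"
  proof (intro sum.cong refl)
    fix k assume k: "k \<in> {1..<n*n}"
    show "(\<integral>z. indicator (Ik n k) z *\<^sub>R g (- real k / real n) \<partial>\<nu>) = measure \<nu> (Ik n k) *\<^sub>R g (- real k / real n)"
      using fin[OF k] nu by (intro has_bochner_integral_integral_eq has_bochner_integral_indicator) auto
  qed
  finally show "(\<integral>z. gn n g z \<partial>\<nu>) = (\<Sum>k\<in>{1..<n*n}. measure \<nu> (Ik n k) *\<^sub>R g (- real k / real n))" .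
qed

lemma inr_eventually:
  assumes z: "z < 0" shows "eventually (\<lambda>n. inr n z) sequentially"
proof -
  obtain N :: nat where N: "real N > 1 / (- z) + (- z)" using reals_Archimedean2 by blast
  show ?thesis
  proof (rule eventually_sequentiallyI[of N])
    fix n assume n: "N \<le> n"
    then have nN: "real n > 1 / (- z) + (- z)" using N by (meson of_nat_le_iff order_less_le_trans)
    have p1: "1 / (- z) > 0" using z by simp
    have "real n > 1 / (-z)" using nN z by linarith
    then have a: "- real n * z > 1" using z by (simp add: field_simps)
    have "real n > - z" using nN p1 by linarith
    then have b: "- real n * z < real n * real n" using z
      using mult_strict_left_mono[of "-z" "real n" "real n"] by simp
    have "1 \<le> fl n z" using a unfolding fl_def by (simp add: le_floor_iff)
    moreover have "fl n z < int (n*n)" using b unfolding fl_def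
      by (simp add: floor_less_iff)
    ultimately show "inr n z" by (simp add: inr_def)
  qed
qed

lemma dq_tendsto:
  "(\<lambda>n. dq n z) \<longlonglongrightarrow> z"
proof -
  have b: "\<bar>dq n z - z\<bar> \<le> 1 / real n" if "n > 0" for n
  proof -
    have f1: "real_of_int (fl n z) \<le> - real n * z" "- real n * z < real_of_int (fl n z) + 1"
      unfolding fl_def by linarith+
    have "dq n z - z = (- real n * z - real_of_int (fl n z)) / real n"
      using that by (simp add: dq_def field_simps)
    then show ?thesis using f1 that by (simp add: divide_right_mono abs_le_iff)
  qed
  have "(\<lambda>n. dq n z - z) \<longlonglongrightarrow> 0"
  proof (rule Lim_null_comparison[OF _ lim_1_over_n])
    show "\<forall>\<^sub>F n in sequentially. norm (dq n z - z) \<le> 1 / real n"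
      using b by (auto intro!: eventually_sequentiallyI[of 1])
  qed
  then show ?thesis by (simp add: LIM_zero_iff)
qed

lemma not_inr_nonneg: assumes "0 \<le> z" shows "\<not> inr n z"
proof -
  have "- real n * z \<le> 0" using assms by simp
  then have "fl n z \<le> 0" unfolding fl_def by (simp add: floor_le_iff)
  then show ?thesis by (simp add: inr_def)
qed

lemma gn_conv:
  fixes g :: "real \<Rightarrow> 'b::{banach, second_countable_topology}"
  assumes nu: "sets \<nu> = sets borel" and int: "integrable \<nu> (\<lambda>z. min 1 (z\<^sup>2))"
    and gc: "continuous_on UNIV g"
    and H: "integrable \<nu> H" and Hb: "\<And>z q. z \<le> q \<Longrightarrow> q < 0 \<Longrightarrow> norm (g q) \<le> H z"
    and H0: "\<And>z. 0 \<le> H z"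
  shows "(\<lambda>n. \<integral>z. gn n g z \<partial>\<nu>) \<longlonglongrightarrow> set_lebesgue_integral \<nu> {..<0} g"
  unfolding set_lebesgue_integral_def
proof (rule integral_dominated_convergence[where w=H])
  have gm: "g \<in> borel_measurable borel" using gc by (rule borel_measurable_continuous_onI)
  then show "(\<lambda>z. indicator {..<0} z *\<^sub>R g z) \<in> borel_measurable \<nu>"
    using nu by (simp add: measurable_cong_sets[OF nu refl])
  show "gn n g \<in> borel_measurable \<nu>" for n
    using gn_integral(1)[OF nu int] by (rule borel_measurable_integrable)
  show "integrable \<nu> H" by fact
  show "AE z in \<nu>. norm (gn n g z) \<le> H z" for n
  proof (intro AE_I2)
    fix z show "norm (gn n g z) \<le> H z"
      using inr_bounds[of n z] Hb H0 by (auto simp: gn_def)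
  qed
  show "AE z in \<nu>. (\<lambda>n. gn n g z) \<longlonglongrightarrow> indicator {..<0} z *\<^sub>R g z"
  proof (intro AE_I2)
    fix z
    show "(\<lambda>n. gn n g z) \<longlonglongrightarrow> indicator {..<0} z *\<^sub>R g z"
    proof (cases "z < 0")
      case True
      have "(\<lambda>n. g (dq n z)) \<longlonglongrightarrow> g z"
        using gc dq_tendsto[of z] by (intro isCont_tendsto_compose[of z g]) (auto simp: continuous_on_eq_continuous_at)
      then show ?thesis
        using True by (simp add: gn_def) (rule Lim_transform_eventually, use inr_eventually[OF True] in \<open>auto elim!: eventually_mono\<close>)
    next
      case False
      then show ?thesis using not_inr_nonneg[of z] by (simp add: gn_def)
    qed
  qed
qed



definition Hb :: "real \<Rightarrow> real \<Rightarrow> real" where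
  "Hb c z = (c\<^sup>2 / 2 + 2 * \<bar>c\<bar>) * min 1 (z\<^sup>2) + 2 * \<bar>c\<bar> * (indicator {..<0} z * (exp z - 1 - z))"

lemma Hb_nonneg: "0 \<le> Hb c z"
proof -
  have "0 \<le> exp z - 1 - z" using exp_ge_add_one_self[of z] by linarith
  then show ?thesis unfolding Hb_def by (intro add_nonneg_nonneg mult_nonneg_nonneg) (auto simp: indicator_def)
qed

lemma Hb_integrable:
  assumes int: "integrable \<nu> (\<lambda>z. min 1 (z\<^sup>2))" and neg: "set_integrable \<nu> {..<0} (\<lambda>z. exp z - 1 - z)"
  shows "integrable \<nu> (Hb c)"
  using neg unfolding Hb_def set_integrable_def
  by (intro Bochner_Integration.integrable_add integrable_mult_right int) simp

lemma Hb_bound: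
  assumes zq: "z \<le> q" "q < 0" and b1: "b \<le> (c*q)\<^sup>2 / 2" and b2: "b \<le> 2 * \<bar>c\<bar> * \<bar>q\<bar>"
  shows "b \<le> Hb c z"
proof -
  have e0: "0 \<le> exp z - 1 - z" using exp_ge_add_one_self[of z] by linarith
  have H1: "(c\<^sup>2 / 2 + 2 * \<bar>c\<bar>) * min 1 (z\<^sup>2) \<le> Hb c z"
    using e0 unfolding Hb_def by (auto simp: indicator_def)
  show ?thesis
  proof (cases "-1 \<le> z")
    case True
    have "(-q) * (-q) \<le> (-z) * (-z)" using zq by (intro mult_mono) auto
    then have qz: "q\<^sup>2 \<le> z\<^sup>2" by (simp add: power2_eq_square)
    have "(-z) * (-z) \<le> 1 * 1" using True zq by (intro mult_mono) auto
    then have z1: "z\<^sup>2 \<le> 1" by (simp add: power2_eq_square)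
    have "b \<le> c\<^sup>2 * q\<^sup>2 / 2" using b1 by (simp add: power_mult_distrib)
    also have "\<dots> \<le> c\<^sup>2 * z\<^sup>2 / 2" using qz by (intro divide_right_mono mult_left_mono) auto
    also have "\<dots> \<le> (c\<^sup>2 / 2 + 2 * \<bar>c\<bar>) * min 1 (z\<^sup>2)"
      using z1 by (simp add: min_def algebra_simps)
    finally show ?thesis using H1 by linarith
  next
    case False
    have "\<bar>q\<bar> \<le> -z" using zq by simp
    also have "-z \<le> (exp z - 1 - z) + 1" using exp_gt_zero[of z] by linarith
    finally have "b \<le> 2 * \<bar>c\<bar> * ((exp z - 1 - z) + 1)"
      using b2 by (meson abs_ge_zero mult_left_mono order_trans zero_le_mult_iff zero_le_numeral)
    moreover have "min 1 (z\<^sup>2) = 1"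
    proof -
      have "1 * 1 \<le> (-z) * (-z)" using False by (intro mult_mono) auto
      then show ?thesis by (simp add: min_def power2_eq_square)
    qed
    moreover have "z < 0" using False by simp
    ultimately show ?thesis unfolding Hb_def
      apply (simp add: algebra_simps) using zero_le_power2[of c] by linarith
  qed
qed



lemma mgf_bound:
  fixes \<mu> \<nu> :: "real measure"
  assumes nu: "sets \<nu> = sets borel" and int: "integrable \<nu> (\<lambda>z. min 1 (z\<^sup>2))"
    and neg: "set_integrable \<nu> {..<0} (\<lambda>z. exp z - 1 - z)"
    and mu: "real_distribution \<mu>" and tau: "0 \<le> \<tau>" and th: "0 \<le> \<theta>"
    and ch: "\<And>u. char \<mu> u = exp (complex_of_real \<tau> *
       set_lebesgue_integral \<nu> {..<0} (\<lambda>z. iexp (u * z) - 1 - \<i> * complex_of_real (u * z)))"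
  shows "(\<integral>\<^sup>+x. ennreal (exp (\<theta> * x)) \<partial>\<mu>) \<le>
     ennreal (exp (\<tau> * set_lebesgue_integral \<nu> {..<0} (\<lambda>z. exp (\<theta> * z) - 1 - \<theta> * z)))"
proof -
  define a where "a n k = - real k / real n" for n k :: nat
  define lam where "lam n k = \<tau> * measure \<nu> (Ik n k)" for n k
  define \<mu>n where "\<mu>n n = cpD {1..<n*n} (a n) (lam n)" for n
  define gu where "gu u q = iexp (u * q) - 1 - \<i> * complex_of_real (u * q)" for u q :: real
  define G where "G q = exp (\<theta> * q) - 1 - \<theta> * q" for q
  have lam0: "0 \<le> lam n k" for n k unfolding lam_def using tau by simp
  have dist: "real_distribution (\<mu>n n)" for n unfolding \<mu>n_def by (rule cpD_real_distribution)
  have chn: "char (\<mu>n n) u = exp (complex_of_real \<tau> * (\<integral>z. gn n (gu u) z \<partial>\<nu>))" for n u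
  proof -
    have "char (\<mu>n n) u = exp (\<Sum>k\<in>{1..<n*n}. complex_of_real (lam n k) * gu u (a n k))"
      unfolding \<mu>n_def gu_def using lam0 by (subst cpD_char) auto
    also have "(\<Sum>k\<in>{1..<n*n}. complex_of_real (lam n k) * gu u (a n k)) =
        complex_of_real \<tau> * (\<Sum>k\<in>{1..<n*n}. measure \<nu> (Ik n k) *\<^sub>R gu u (- real k / real n))"
      by (simp add: sum_distrib_left lam_def a_def scaleR_conv_of_real mult_ac)
    also have "(\<Sum>k\<in>{1..<n*n}. measure \<nu> (Ik n k) *\<^sub>R gu u (- real k / real n)) = (\<integral>z. gn n (gu u) z \<partial>\<nu>)"
      by (rule gn_integral(2)[OF nu int, symmetric])
    finally show ?thesis .
  qed
  have gu_cont: "continuous_on UNIV (gu u)" for u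
    unfolding gu_def by (intro continuous_intros)
  have gu_bound: "norm (gu u q) \<le> Hb u z" if "z \<le> q" "q < 0" for u z q
    using that iexp_diff_bound1[of "u*q"] iexp_diff_bound2[of "u*q"]
    by (intro Hb_bound[of z q]) (auto simp: gu_def abs_mult)
  have chconv: "(\<lambda>n. char (\<mu>n n) u) \<longlonglongrightarrow> char \<mu> u" for u
  proof -
    have "(\<lambda>n. \<integral>z. gn n (gu u) z \<partial>\<nu>) \<longlonglongrightarrow> set_lebesgue_integral \<nu> {..<0} (gu u)"
      by (rule gn_conv[OF nu int gu_cont Hb_integrable[OF int neg] gu_bound Hb_nonneg])
    then show ?thesis unfolding chn ch gu_def[symmetric]
      by (intro tendsto_intros)
  qed
  have wc: "weak_conv_m \<mu>n \<mu>"
    by (rule levy_continuity[OF dist mu chconv])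
  define \<Phi>n where "\<Phi>n n = \<tau> * (\<integral>z. gn n G z \<partial>\<nu>)" for n
  define \<Phi> where "\<Phi> = \<tau> * set_lebesgue_integral \<nu> {..<0} G"
  have mgfn: "(\<integral>\<^sup>+x. ennreal (exp (\<theta> * x)) \<partial>\<mu>n n) = ennreal (exp (\<Phi>n n))" for n
  proof -
    have "(\<integral>\<^sup>+x. ennreal (exp (\<theta> * x)) \<partial>\<mu>n n) = ennreal (exp (\<Sum>k\<in>{1..<n*n}. lam n k * G (a n k)))"
      unfolding \<mu>n_def G_def using lam0 by (subst cpD_mgf) auto
    also have "(\<Sum>k\<in>{1..<n*n}. lam n k * G (a n k)) = \<tau> * (\<Sum>k\<in>{1..<n*n}. measure \<nu> (Ik n k) *\<^sub>R G (- real k / real n))"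
      by (simp add: sum_distrib_left lam_def a_def mult_ac)
    also have "(\<Sum>k\<in>{1..<n*n}. measure \<nu> (Ik n k) *\<^sub>R G (- real k / real n)) = (\<integral>z. gn n G z \<partial>\<nu>)"
      by (rule gn_integral(2)[OF nu int, symmetric])
    finally show ?thesis unfolding \<Phi>n_def .
  qed
  have G_cont: "continuous_on UNIV G" unfolding G_def by (intro continuous_intros)
  have G_bound: "norm (G q) \<le> Hb \<theta> z" if "z \<le> q" "q < 0" for z q
  proof -
    have tq: "\<theta> * q \<le> 0" using th that by (simp add: mult_nonneg_nonpos)
    have g0: "0 \<le> G q" unfolding G_def using exp_ge_add_one_self[of "\<theta>*q"] by linarith
    have g1: "G q \<le> (\<theta>*q)\<^sup>2 / 2" unfolding G_def using exp_le_quad[OF tq] by linarith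
    have "exp (\<theta> * q) \<le> 1" using tq by simp
    moreover have "2 * \<bar>\<theta>\<bar> * \<bar>q\<bar> = - 2 * (\<theta> * q)" using th that by simp
    ultimately have g2: "G q \<le> 2 * \<bar>\<theta>\<bar> * \<bar>q\<bar>" unfolding G_def using tq by linarith
    show ?thesis using g0 g1 g2 that by (intro Hb_bound[of z q]) auto
  qed
  have \<Phi>conv: "\<Phi>n \<longlonglongrightarrow> \<Phi>"
    unfolding \<Phi>n_def \<Phi>_def
    by (intro tendsto_intros gn_conv[OF nu int G_cont Hb_integrable[OF int neg] G_bound Hb_nonneg])
  define fK where "fK K x = min (exp (\<theta> * x)) (real K)" for K :: nat and x
  have fKm: "fK K \<in> borel_measurable borel" for K unfolding fK_def by measurable
  have fK_bound: "(\<integral>x. fK K x \<partial>\<mu>) \<le> exp \<Phi>" for K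
  proof -
    have fc: "isCont (fK K) x" for x unfolding fK_def by (intro continuous_intros)
    have fb: "norm (fK K x) \<le> real K" for x unfolding fK_def by auto
    have lim: "(\<lambda>n. \<integral>x. fK K x \<partial>\<mu>n n) \<longlonglongrightarrow> (\<integral>x. fK K x \<partial>\<mu>)"
      by (rule weak_conv_imp_integral_bdd_continuous_conv[OF dist mu wc fc fb])
    have le: "(\<integral>x. fK K x \<partial>\<mu>n n) \<le> exp (\<Phi>n n)" for n
    proof -
      interpret D: real_distribution "\<mu>n n" by (rule dist)
      have intg: "integrable (\<mu>n n) (fK K)"
        using fb fKm[of K] by (intro D.integrable_const_bound[where B="real K"])
          (auto simp: measurable_cong_sets[OF D.events_eq_borel refl])
      have "ennreal (\<integral>x. fK K x \<partial>\<mu>n n) = (\<integral>\<^sup>+x. ennreal (fK K x) \<partial>\<mu>n n)"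
        by (intro nn_integral_eq_integral[symmetric] intg) (auto simp: fK_def)
      also have "\<dots> \<le> (\<integral>\<^sup>+x. ennreal (exp (\<theta> * x)) \<partial>\<mu>n n)"
        by (intro nn_integral_mono) (auto simp: fK_def)
      also have "\<dots> = ennreal (exp (\<Phi>n n))" by (rule mgfn)
      finally show ?thesis by (simp add: ennreal_le_iff)
    qed
    show ?thesis
      by (rule LIMSEQ_le[OF lim tendsto_exp[OF \<Phi>conv]]) (use le in auto)
  qed
  interpret Mu: real_distribution \<mu> by (rule mu)
  have "(\<lambda>K. \<integral>\<^sup>+x. ennreal (fK K x) \<partial>\<mu>) \<longlonglongrightarrow> (\<integral>\<^sup>+x. ennreal (exp (\<theta> * x)) \<partial>\<mu>)"
  proof (rule nn_integral_LIMSEQ)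
    show "incseq (\<lambda>K x. ennreal (fK K x))"
      by (auto simp: incseq_def le_fun_def fK_def intro!: ennreal_leI)
    show "(\<lambda>x. ennreal (fK K x)) \<in> borel_measurable \<mu>" for K
      unfolding fK_def by measurable
    show "(\<lambda>K. ennreal (fK K x)) \<longlonglongrightarrow> ennreal (exp (\<theta> * x))" for x
    proof (rule tendsto_eventually)
      obtain N :: nat where "exp (\<theta> * x) \<le> real N" using real_arch_simple by blast
      then show "\<forall>\<^sub>F K in sequentially. ennreal (fK K x) = ennreal (exp (\<theta> * x))"
        by (intro eventually_sequentiallyI[of N]) (auto simp: fK_def min_def)
    qed
  qed
  moreover have "(\<integral>\<^sup>+x. ennreal (fK K x) \<partial>\<mu>) \<le> ennreal (exp \<Phi>)" for K
  proof -
    have intg: "integrable \<mu> (fK K)"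
      using fKm[of K] by (intro Mu.integrable_const_bound[where B="real K"])
          (auto simp: measurable_cong_sets[OF Mu.events_eq_borel refl] fK_def)
    have "(\<integral>\<^sup>+x. ennreal (fK K x) \<partial>\<mu>) = ennreal (\<integral>x. fK K x \<partial>\<mu>)"
      by (intro nn_integral_eq_integral intg) (auto simp: fK_def)
    then show ?thesis using fK_bound[of K] by (simp add: ennreal_leI)
  qed
  ultimately have "(\<integral>\<^sup>+x. ennreal (exp (\<theta> * x)) \<partial>\<mu>) \<le> ennreal (exp \<Phi>)"
    by (intro LIMSEQ_le_const2) auto
  then show ?thesis unfolding \<Phi>_def G_def .
qed



lemma gauss_mgf:
  assumes s: "0 < s"
  shows "(\<integral>\<^sup>+x. ennreal (normal_density 0 s x) * ennreal (exp (b * x)) \<partial>lborel) = ennreal (exp (b\<^sup>2 * s\<^sup>2 / 2))"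
proof -
  have eq: "normal_density 0 s x * exp (b * x) = exp (b\<^sup>2 * s\<^sup>2 / 2) * normal_density (b * s\<^sup>2) s x" for x
  proof -
    have "-(x - 0)\<^sup>2 / (2 * s\<^sup>2) + b * x = -(x - b * s\<^sup>2)\<^sup>2 / (2 * s\<^sup>2) + b\<^sup>2 * s\<^sup>2 / 2"
      using s by (simp add: field_simps power2_eq_square)
    then show ?thesis unfolding normal_density_def
      by (simp add: exp_add[symmetric] mult_ac)
  qed
  have "(\<integral>\<^sup>+x. ennreal (normal_density 0 s x) * ennreal (exp (b * x)) \<partial>lborel) =
        (\<integral>\<^sup>+x. ennreal (exp (b\<^sup>2 * s\<^sup>2 / 2)) * ennreal (normal_density (b * s\<^sup>2) s x) \<partial>lborel)"
    by (intro nn_integral_cong) (simp add: ennreal_mult'[symmetric] eq)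
  also have "\<dots> = ennreal (exp (b\<^sup>2 * s\<^sup>2 / 2)) * (\<integral>\<^sup>+x. ennreal (normal_density (b * s\<^sup>2) s x) \<partial>lborel)"
    by (rule nn_integral_cmult) simp
  also have "(\<integral>\<^sup>+x. ennreal (normal_density (b * s\<^sup>2) s x) \<partial>lborel) = 1"
    using s by (subst nn_integral_eq_integral) auto
  finally show ?thesis by simp
qed

lemma indep_nn_prod:
  fixes X Y :: "'a \<Rightarrow> real" and f g :: "real \<Rightarrow> ennreal"
  assumes P: "prob_space M" and ind: "prob_space.indep_var M borel X borel Y"
    and f: "f \<in> borel_measurable borel" and g: "g \<in> borel_measurable borel"
  shows "(\<integral>\<^sup>+x. f (X x) * g (Y x) \<partial>M) = (\<integral>\<^sup>+x. f (X x) \<partial>M) * (\<integral>\<^sup>+x. g (Y x) \<partial>M)"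
proof -
  interpret prob_space M by (rule P)
  have rv: "random_variable borel X" "random_variable borel Y"
    using ind indep_var_distribution_eq by auto
  have jd: "distr M borel X \<Otimes>\<^sub>M distr M borel Y = distr M (borel \<Otimes>\<^sub>M borel) (\<lambda>x. (X x, Y x))"
    using ind indep_var_distribution_eq by auto
  interpret DX: prob_space "distr M borel X" using rv by (intro prob_space_distr) auto
  interpret DY: prob_space "distr M borel Y" using rv by (intro prob_space_distr) auto
  interpret PP: pair_sigma_finite "distr M borel X" "distr M borel Y" ..
  have "(\<integral>\<^sup>+x. f (X x) * g (Y x) \<partial>M) = (\<integral>\<^sup>+z. f (fst z) * g (snd z) \<partial>distr M (borel \<Otimes>\<^sub>M borel) (\<lambda>x. (X x, Y x)))"
    using rv f g by (subst nn_integral_distr) auto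
  also have "\<dots> = (\<integral>\<^sup>+z. f (fst z) * g (snd z) \<partial>(distr M borel X \<Otimes>\<^sub>M distr M borel Y))"
    by (simp add: jd)
  also have "\<dots> = (\<integral>\<^sup>+a. \<integral>\<^sup>+b. f a * g b \<partial>distr M borel Y \<partial>distr M borel X)"
    using DY.nn_integral_fst[of "\<lambda>z. f (fst z) * g (snd z)" "distr M borel X"] f g by simp
  also have "\<dots> = (\<integral>\<^sup>+a. f a * (\<integral>\<^sup>+b. g b \<partial>distr M borel Y) \<partial>distr M borel X)"
    using g by (intro nn_integral_cong nn_integral_cmult) auto
  also have "\<dots> = (\<integral>\<^sup>+a. f a \<partial>distr M borel X) * (\<integral>\<^sup>+b. g b \<partial>distr M borel Y)"
    using f by (intro nn_integral_multc) auto
  also have "\<dots> = (\<integral>\<^sup>+x. f (X x) \<partial>M) * (\<integral>\<^sup>+x. g (Y x) \<partial>M)"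
    using rv f g by (simp add: nn_integral_distr)
  finally show ?thesis .
qed



lemma G_le_Hb:
  fixes \<theta> z q :: real
  assumes th: "0 \<le> \<theta>" and zq: "z \<le> q" "q < 0"
  shows "norm (exp (\<theta> * q) - 1 - \<theta> * q) \<le> Hb \<theta> z"
proof -
  have tq: "\<theta> * q \<le> 0" using th zq by (simp add: mult_nonneg_nonpos)
  have g0: "0 \<le> exp (\<theta> * q) - 1 - \<theta> * q" using exp_ge_add_one_self[of "\<theta>*q"] by linarith
  have g1: "exp (\<theta> * q) - 1 - \<theta> * q \<le> (\<theta>*q)\<^sup>2 / 2" using exp_le_quad[OF tq] by linarith
  have "exp (\<theta> * q) \<le> 1" using tq by simp
  moreover have "2 * \<bar>\<theta>\<bar> * \<bar>q\<bar> = - 2 * (\<theta> * q)" using th zq by simp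
  ultimately have g2: "exp (\<theta> * q) - 1 - \<theta> * q \<le> 2 * \<bar>\<theta>\<bar> * \<bar>q\<bar>" using tq by linarith
  show ?thesis using g0 g1 g2 zq by (intro Hb_bound[of z q]) auto
qed

lemma D_bound:
  fixes \<theta> \<epsilon> z :: real
  assumes th: "0 \<le> \<theta>" and eps: "0 < \<epsilon>"
  shows "indicator {..<0} z * ((exp (\<theta> * z) - 1 - \<theta> * z) - \<theta> * (exp z - 1 - z))
     \<le> \<theta>\<^sup>2 / 2 * (indicator {-\<epsilon>..<0} z * z\<^sup>2) + \<theta> * indicator {..<-\<epsilon>} z"
proof (cases "z < 0")
  case False
  then show ?thesis using eps th by (auto simp: indicator_def)
next
  case True
  show ?thesis
  proof (cases "-\<epsilon> \<le> z")
    case True2: True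
    have tq: "\<theta> * z \<le> 0" using th True by (simp add: mult_nonneg_nonpos)
    have g1: "exp (\<theta> * z) - 1 - \<theta> * z \<le> (\<theta>*z)\<^sup>2 / 2" using exp_le_quad[OF tq] by linarith
    have "0 \<le> exp z - 1 - z" using exp_ge_add_one_self[of z] by linarith
    then have "0 \<le> \<theta> * (exp z - 1 - z)" using th by simp
    then show ?thesis using True True2 g1 by (simp add: indicator_def power_mult_distrib)
  next
    case False
    have tq: "\<theta> * z \<le> 0" using th True by (simp add: mult_nonneg_nonpos)
    then have e1: "exp (\<theta> * z) \<le> 1" by simp
    have e2: "0 \<le> \<theta> * exp z" using th by simp
    have e3: "\<theta> * (exp z - 1 - z) = \<theta> * exp z - \<theta> - \<theta> * z" by (simp add: algebra_simps)
    have "(exp (\<theta> * z) - 1 - \<theta> * z) - \<theta> * (exp z - 1 - z) \<le> \<theta>"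
      using e1 e2 e3 by linarith
    then show ?thesis using True False by (simp add: indicator_def)
  qed
qed

theorem lemma4p6:
  fixes M :: "'a measure" and \<nu> :: "real measure"
    and \<sigma> b r \<delta> \<epsilon> c :: real
    and W Jc :: "real \<Rightarrow> 'a \<Rightarrow> real"
  assumes levy: "levy_measure \<nu>"
    and cond_i: "\<sigma> \<noteq> 0 \<or> emeasure \<nu> {..<0} > 0
                 \<or> (\<integral>\<^sup>+ z. indicator {0<..1} z * ennreal z \<partial>\<nu>) = \<infinity>"
    and cond_ii: "\<sigma> \<noteq> 0 \<or> emeasure \<nu> {0<..} > 0
                 \<or> (\<integral>\<^sup>+ z. indicator {-1..<0} z * ennreal \<bar>z\<bar> \<partial>\<nu>) = \<infinity>"
    and cond_iii: "set_integrable \<nu> {1..} exp"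
    and b_def: "b = - \<sigma>\<^sup>2 / 2
        - (LINT z:-{0}|\<nu>. exp z - 1 - z * indicator {-1..1} z)"
    and neg_int: "set_integrable \<nu> {..<0} (\<lambda>z. exp z - 1 - z)"
    and r: "r \<ge> 0" and \<delta>: "\<delta> \<ge> 0"
    and d_pos: "r - \<delta> - (LINT z:{0<..}|\<nu>. exp z - 1) > 0"
    and sigma_pos: "\<sigma> > 0"
    and P: "prob_space M"
    and W: "bm_marginals M W"
    and Jc_meas: "\<And>t. Jc t \<in> borel_measurable M"
    and Jc_law: "\<And>t u. t > 0 \<Longrightarrow> char (distr M borel (Jc t)) u = comp_neg_jump_char \<nu> t u"
    and indep: "\<And>t. t > 0 \<Longrightarrow> prob_space.indep_var M borel (W t) borel (Jc t)"
    and eps: "0 < \<epsilon>" "\<epsilon> < 1"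
    and c: "0 < c"
  shows "\<forall>\<tau>. \<tau> > 0 \<and>
           (measure \<nu> {..<-\<epsilon>} = \<sigma>\<^sup>2 / 2 \<or>
            \<tau> \<le> c\<^sup>2 / (measure \<nu> {..<-\<epsilon>} - \<sigma>\<^sup>2 / 2)\<^sup>2) \<longrightarrow>
         (let L = \<sigma>\<^sup>2 + 2 * (LINT z:{-\<epsilon>..<0}|\<nu>. z\<^sup>2);
              p = (c - sqrt \<tau> * (measure \<nu> {..<-\<epsilon>} - \<sigma>\<^sup>2 / 2)) / L;
              XW = (\<lambda>x. \<sigma> * W \<tau> x - \<sigma>\<^sup>2 * \<tau> / 2);
              Jm = (\<lambda>x. Jc \<tau> x - \<tau> * (LINT z:{..<0}|\<nu>. exp z - 1 - z))
          in p \<ge> 0 \<and>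
             measure M {x \<in> space M. XW x + Jm x \<ge> c * sqrt \<tau>} \<le> exp (- L * p\<^sup>2 / 2))"

proof (intro allI impI)
  fix \<tau> :: real
  assume H\<tau>: "\<tau> > 0 \<and> (measure \<nu> {..<-\<epsilon>} = \<sigma>\<^sup>2 / 2 \<or> \<tau> \<le> c\<^sup>2 / (measure \<nu> {..<-\<epsilon>} - \<sigma>\<^sup>2 / 2)\<^sup>2)"
  have tau: "0 < \<tau>" using H\<tau> by simp
  have nu: "sets \<nu> = sets borel" and int: "integrable \<nu> (\<lambda>z. min 1 (z\<^sup>2))"
    using levy by (auto simp: levy_measure_def)
  have spnu: "space \<nu> = UNIV" using sets_eq_imp_space_eq[OF nu] by simp
  interpret P: prob_space M by (rule P)
  define s where "s = measure \<nu> {..<-\<epsilon>}"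
  define I where "I = (LINT z:{-\<epsilon>..<0}|\<nu>. z\<^sup>2)"
  define L where "L = \<sigma>\<^sup>2 + 2 * I"
  define a where "a = s - \<sigma>\<^sup>2 / 2"
  define rt where "rt = sqrt \<tau>"
  define p where "p = (c - rt * a) / L"
  define K where "K = (LINT z:{..<0}|\<nu>. exp z - 1 - z)"
  define \<theta> where "\<theta> = p / rt"
  have r0: "0 < rt" using tau by (simp add: rt_def)
  have r2: "rt\<^sup>2 = \<tau>" using tau by (simp add: rt_def)
  have I0: "0 \<le> I" unfolding I_def set_lebesgue_integral_def
    by (intro Bochner_Integration.integral_nonneg) (auto simp: indicator_def)
  have L0: "0 < L" unfolding L_def using I0 sigma_pos by (simp add: add_pos_nonneg)
  have cra: "rt * a \<le> c"
  proof (cases "a = 0")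
    case True then show ?thesis using c by simp
  next
    case False
    then have "\<tau> \<le> c\<^sup>2 / a\<^sup>2" using H\<tau> by (auto simp: a_def s_def)
    then have "rt \<le> sqrt (c\<^sup>2 / a\<^sup>2)" unfolding rt_def by (rule real_sqrt_le_mono)
    also have "\<dots> = c / \<bar>a\<bar>" using c by (simp add: real_sqrt_divide)
    finally have "rt * \<bar>a\<bar> \<le> c" using False by (simp add: field_simps)
    moreover have "rt * a \<le> rt * \<bar>a\<bar>" using r0 by (intro mult_left_mono) auto
    ultimately show ?thesis by linarith
  qed
  have p0: "0 \<le> p" unfolding p_def using cra L0 by simp
  have th0: "0 \<le> \<theta>" unfolding \<theta>_def using p0 r0 by simp

  have Wd: "distributed M lborel (W \<tau>) (normal_density 0 (sqrt \<tau>))"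
    using W tau by (simp add: bm_marginals_def)
  have Wm[measurable]: "W \<tau> \<in> borel_measurable M"
    using Wd by (simp add: distributed_def measurable_lborel2)
  have Jm[measurable]: "Jc \<tau> \<in> borel_measurable M" by (rule Jc_meas)
  have ind: "prob_space.indep_var M borel (W \<tau>) borel (Jc \<tau>)" using indep tau by simp
  define G where "G z = exp (\<theta> * z) - 1 - \<theta> * z" for z
  define \<Phi> where "\<Phi> = set_lebesgue_integral \<nu> {..<0} G"
  have iI: "integrable \<nu> (\<lambda>z. indicator {-\<epsilon>..<0} z * z\<^sup>2)"
  proof (rule Bochner_Integration.integrable_bound[OF int])
    show "(\<lambda>z. indicator {-\<epsilon>..<0} z * z\<^sup>2) \<in> borel_measurable \<nu>"
      using nu by (simp add: measurable_cong_sets[OF nu refl])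
    show "AE z in \<nu>. norm (indicator {-\<epsilon>..<0} z * z\<^sup>2) \<le> norm (min 1 (z\<^sup>2))"
    proof (intro AE_I2)
      fix z :: real
      show "norm (indicator {-\<epsilon>..<0} z * z\<^sup>2) \<le> norm (min 1 (z\<^sup>2))"
      proof (cases "z \<in> {-\<epsilon>..<0}")
        case True
        then have "(-z) * (-z) \<le> 1 * 1" using eps by (intro mult_mono) auto
        then have "z\<^sup>2 \<le> 1" by (simp add: power2_eq_square)
        then show ?thesis using True by (simp add: min_def)
      qed simp
    qed
  qed
  have iS: "integrable \<nu> (indicator {..<-\<epsilon>} :: real \<Rightarrow> real)"
  proof (rule Bochner_Integration.integrable_bound[OF integrable_mult_right[OF int, of "1 / \<epsilon>\<^sup>2"]])
    show "(indicator {..<-\<epsilon>} :: real \<Rightarrow> real) \<in> borel_measurable \<nu>"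
      using nu by (simp add: measurable_cong_sets[OF nu refl])
    show "AE z in \<nu>. norm (indicator {..<-\<epsilon>} z :: real) \<le> norm (1 / \<epsilon>\<^sup>2 * min 1 (z\<^sup>2))"
    proof (intro AE_I2)
      fix z :: real
      show "norm (indicator {..<-\<epsilon>} z :: real) \<le> norm (1 / \<epsilon>\<^sup>2 * min 1 (z\<^sup>2))"
      proof (cases "z < -\<epsilon>")
        case True
        have "\<epsilon> * \<epsilon> \<le> (-z) * (-z)" using True eps by (intro mult_mono) auto
        then have ez: "\<epsilon>\<^sup>2 \<le> z\<^sup>2" by (simp add: power2_eq_square)
        have e1: "\<epsilon>\<^sup>2 \<le> 1" using eps by (simp add: power_le_one)
        have "\<epsilon>\<^sup>2 \<le> min 1 (z\<^sup>2)" using ez e1 by simp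
        then have "1 \<le> 1 / \<epsilon>\<^sup>2 * min 1 (z\<^sup>2)" using eps by (simp add: field_simps)
        then show ?thesis using True by simp
      qed simp
    qed
  qed
  have iG: "integrable \<nu> (\<lambda>z. indicator {..<0} z * G z)"
  proof (rule Bochner_Integration.integrable_bound[OF Hb_integrable[OF int neg_int, of \<theta>]])
    show "(\<lambda>z. indicator {..<0} z * G z) \<in> borel_measurable \<nu>"
      unfolding G_def using nu by (simp add: measurable_cong_sets[OF nu refl])
    show "AE z in \<nu>. norm (indicator {..<0} z * G z) \<le> norm (Hb \<theta> z)"
    proof (intro AE_I2)
      fix z :: real
      show "norm (indicator {..<0} z * G z) \<le> norm (Hb \<theta> z)"
        using G_le_Hb[OF th0, of z z] Hb_nonneg[of \<theta> z] unfolding G_def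
        by (cases "z < 0") auto
    qed
  qed
  have iE: "integrable \<nu> (\<lambda>z. indicator {..<0} z * (exp z - 1 - z))"
    using neg_int by (simp add: set_integrable_def)
  have PhiK: "\<Phi> - \<theta> * K \<le> \<theta>\<^sup>2 / 2 * I + \<theta> * s"
  proof -
    have "\<Phi> - \<theta> * K = (\<integral>z. indicator {..<0} z * G z - \<theta> * (indicator {..<0} z * (exp z - 1 - z)) \<partial>\<nu>)"
      unfolding \<Phi>_def K_def set_lebesgue_integral_def using iG iE by simp
    also have "\<dots> \<le> (\<integral>z. \<theta>\<^sup>2 / 2 * (indicator {-\<epsilon>..<0} z * z\<^sup>2) + \<theta> * indicator {..<-\<epsilon>} z \<partial>\<nu>)"
    proof (rule integral_mono)
      show "integrable \<nu> (\<lambda>z. indicator {..<0} z * G z - \<theta> * (indicator {..<0} z * (exp z - 1 - z)))"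
        using iG iE by simp
      show "integrable \<nu> (\<lambda>z. \<theta>\<^sup>2 / 2 * (indicator {-\<epsilon>..<0} z * z\<^sup>2) + \<theta> * indicator {..<-\<epsilon>} z)"
        using iI iS by simp
      fix z
      show "indicator {..<0} z * G z - \<theta> * (indicator {..<0} z * (exp z - 1 - z)) \<le>
            \<theta>\<^sup>2 / 2 * (indicator {-\<epsilon>..<0} z * z\<^sup>2) + \<theta> * indicator {..<-\<epsilon>} z"
        using D_bound[OF th0 eps(1), of z] unfolding G_def by (simp add: algebra_simps)
    qed
    also have "\<dots> = \<theta>\<^sup>2 / 2 * I + \<theta> * s"
      unfolding I_def s_def set_lebesgue_integral_def using iI iS by (simp add: spnu)
    finally show ?thesis .
  qed

  define Y where "Y x = \<sigma> * W \<tau> x - \<sigma>\<^sup>2 * \<tau> / 2 + (Jc \<tau> x - \<tau> * K)" for x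
  define A where "A = {x \<in> space M. c * rt \<le> Y x}"
  define C where "C = - \<theta> * \<sigma>\<^sup>2 * \<tau> / 2 - \<theta> * \<tau> * K - \<theta> * (c * rt)"
  have Ym[measurable]: "Y \<in> borel_measurable M" unfolding Y_def by measurable
  have Asets: "A \<in> sets M" unfolding A_def by measurable
  have step1: "emeasure M A \<le> (\<integral>\<^sup>+x. ennreal (exp (\<theta> * (Y x - c * rt))) \<partial>M)"
  proof -
    have "emeasure M A = (\<integral>\<^sup>+x. indicator A x \<partial>M)" using Asets by simp
    also have "\<dots> \<le> (\<integral>\<^sup>+x. ennreal (exp (\<theta> * (Y x - c * rt))) \<partial>M)"
    proof (intro nn_integral_mono)
      fix x
      show "indicator A x \<le> ennreal (exp (\<theta> * (Y x - c * rt)))"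
      proof (cases "x \<in> A")
        case True
        then have "0 \<le> \<theta> * (Y x - c * rt)" using th0 by (simp add: A_def)
        then have "1 \<le> exp (\<theta> * (Y x - c * rt))" by simp
        then show ?thesis using True by simp
      qed simp
    qed
    finally show ?thesis .
  qed
  have step2: "(\<integral>\<^sup>+x. ennreal (exp (\<theta> * (Y x - c * rt))) \<partial>M) =
      ennreal (exp C) * (\<integral>\<^sup>+x. ennreal (exp ((\<theta> * \<sigma>) * W \<tau> x)) * ennreal (exp (\<theta> * Jc \<tau> x)) \<partial>M)"
  proof -
    have "(\<integral>\<^sup>+x. ennreal (exp (\<theta> * (Y x - c * rt))) \<partial>M) =
        (\<integral>\<^sup>+x. ennreal (exp C) * (ennreal (exp ((\<theta> * \<sigma>) * W \<tau> x)) * ennreal (exp (\<theta> * Jc \<tau> x))) \<partial>M)"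
    proof (intro nn_integral_cong)
      fix x
      have "\<theta> * (Y x - c * rt) = C + (\<theta> * \<sigma>) * W \<tau> x + \<theta> * Jc \<tau> x"
        unfolding Y_def C_def by (simp add: algebra_simps)
      then show "ennreal (exp (\<theta> * (Y x - c * rt))) = ennreal (exp C) * (ennreal (exp ((\<theta> * \<sigma>) * W \<tau> x)) * ennreal (exp (\<theta> * Jc \<tau> x)))"
        by (simp add: exp_add ennreal_mult'[symmetric] mult_ac)
    qed
    also have "\<dots> = ennreal (exp C) * (\<integral>\<^sup>+x. ennreal (exp ((\<theta> * \<sigma>) * W \<tau> x)) * ennreal (exp (\<theta> * Jc \<tau> x)) \<partial>M)"
      by (rule nn_integral_cmult) simp
    finally show ?thesis .
  qed
  have step3: "(\<integral>\<^sup>+x. ennreal (exp ((\<theta> * \<sigma>) * W \<tau> x)) * ennreal (exp (\<theta> * Jc \<tau> x)) \<partial>M) =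
      (\<integral>\<^sup>+x. ennreal (exp ((\<theta> * \<sigma>) * W \<tau> x)) \<partial>M) * (\<integral>\<^sup>+x. ennreal (exp (\<theta> * Jc \<tau> x)) \<partial>M)"
    using indep_nn_prod[OF P ind, of "\<lambda>w. ennreal (exp ((\<theta> * \<sigma>) * w))" "\<lambda>j. ennreal (exp (\<theta> * j))"] by simp
  have gauss: "(\<integral>\<^sup>+x. ennreal (exp ((\<theta> * \<sigma>) * W \<tau> x)) \<partial>M) = ennreal (exp ((\<theta> * \<sigma>)\<^sup>2 * rt\<^sup>2 / 2))"
  proof -
    have "(\<integral>\<^sup>+x. ennreal (exp ((\<theta> * \<sigma>) * W \<tau> x)) \<partial>M) =
        (\<integral>\<^sup>+x. ennreal (normal_density 0 (sqrt \<tau>) x) * ennreal (exp ((\<theta> * \<sigma>) * x)) \<partial>lborel)"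
      using distributed_nn_integral[OF Wd, of "\<lambda>x. ennreal (exp ((\<theta> * \<sigma>) * x))"] by simp
    also have "\<dots> = ennreal (exp ((\<theta> * \<sigma>)\<^sup>2 * rt\<^sup>2 / 2))"
      unfolding rt_def using gauss_mgf[of "sqrt \<tau>" "\<theta> * \<sigma>"] tau by simp
    finally show ?thesis .
  qed
  have jump: "(\<integral>\<^sup>+x. ennreal (exp (\<theta> * Jc \<tau> x)) \<partial>M) \<le> ennreal (exp (\<tau> * \<Phi>))"
  proof -
    have "(\<integral>\<^sup>+x. ennreal (exp (\<theta> * Jc \<tau> x)) \<partial>M) = (\<integral>\<^sup>+x. ennreal (exp (\<theta> * x)) \<partial>distr M borel (Jc \<tau>))"
      by (subst nn_integral_distr) auto
    also have "\<dots> \<le> ennreal (exp (\<tau> * \<Phi>))"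
      unfolding \<Phi>_def G_def
    proof (rule mgf_bound[OF nu int neg_int _ less_imp_le[OF tau] th0])
      show "real_distribution (distr M borel (Jc \<tau>))" by (rule P.real_distribution_distr) simp
      fix u
      show "char (distr M borel (Jc \<tau>)) u = exp (complex_of_real \<tau> *
         set_lebesgue_integral \<nu> {..<0} (\<lambda>z. iexp (u * z) - 1 - \<i> * complex_of_real (u * z)))"
        using Jc_law[OF tau, of u] by (simp add: comp_neg_jump_char_def)
    qed
    finally show ?thesis .
  qed
  define Ex where "Ex = C + (\<theta> * \<sigma>)\<^sup>2 * rt\<^sup>2 / 2 + \<tau> * \<Phi>"
  have emA: "emeasure M A \<le> ennreal (exp Ex)"
  proof -
    have "emeasure M A \<le> ennreal (exp C) * ((\<integral>\<^sup>+x. ennreal (exp ((\<theta> * \<sigma>) * W \<tau> x)) \<partial>M) * (\<integral>\<^sup>+x. ennreal (exp (\<theta> * Jc \<tau> x)) \<partial>M))"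
      using step1 step2 step3 by simp
    also have "\<dots> \<le> ennreal (exp C) * (ennreal (exp ((\<theta> * \<sigma>)\<^sup>2 * rt\<^sup>2 / 2)) * ennreal (exp (\<tau> * \<Phi>)))"
      unfolding gauss by (intro mult_left_mono jump) auto
    also have "\<dots> = ennreal (exp Ex)"
      unfolding Ex_def by (simp add: exp_add ennreal_mult'[symmetric] mult_ac)
    finally show ?thesis .
  qed
  have Exb: "Ex \<le> - L * p\<^sup>2 / 2"
  proof -
    have tr: "\<tau> = rt\<^sup>2" using r2 by simp
    have thr: "\<theta> = p / rt" by (simp add: \<theta>_def)
    have Ex_eq: "Ex = - p * rt * \<sigma>\<^sup>2 / 2 - p * rt * K - p * c + p\<^sup>2 * \<sigma>\<^sup>2 / 2 + rt\<^sup>2 * \<Phi>"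
      unfolding Ex_def C_def thr tr using r0 by (simp add: field_simps power2_eq_square)
    have "rt\<^sup>2 * (\<Phi> - \<theta> * K) \<le> rt\<^sup>2 * (\<theta>\<^sup>2 / 2 * I + \<theta> * s)"
      using PhiK by (intro mult_left_mono) auto
    also have "rt\<^sup>2 * (\<theta>\<^sup>2 / 2 * I + \<theta> * s) = p\<^sup>2 * I / 2 + p * rt * s"
      unfolding thr using r0 by (simp add: field_simps power2_eq_square)
    also have "rt\<^sup>2 * (\<Phi> - \<theta> * K) = rt\<^sup>2 * \<Phi> - p * rt * K"
      unfolding thr using r0 by (simp add: field_simps power2_eq_square)
    finally have t1: "rt\<^sup>2 * \<Phi> - p * rt * K \<le> p\<^sup>2 * I / 2 + p * rt * s" .
    have cpl: "c = p * L + rt * a" unfolding p_def using L0 by simp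
    have pI: "0 \<le> p\<^sup>2 * I" using I0 by simp
    have "- p * rt * \<sigma>\<^sup>2 / 2 - p * c + p\<^sup>2 * \<sigma>\<^sup>2 / 2 + (p\<^sup>2 * I / 2 + p * rt * s) - (- L * p\<^sup>2 / 2) = - (p\<^sup>2 * I) / 2"
      unfolding cpl L_def a_def by (simp add: field_simps power2_eq_square)
    then show ?thesis using Ex_eq t1 pI by linarith
  qed
  have "measure M A \<le> exp Ex"
    using emA by (simp add: P.emeasure_eq_measure)
  then have "measure M A \<le> exp (- L * p\<^sup>2 / 2)" using Exb by (meson exp_le_cancel_iff order_trans)
  then have final: "0 \<le> p \<and> measure M {x \<in> space M. c * rt \<le> \<sigma> * W \<tau> x - \<sigma>\<^sup>2 * \<tau> / 2 + (Jc \<tau> x - \<tau> * K)} \<le> exp (- L * p\<^sup>2 / 2)"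
    using p0 unfolding A_def Y_def by simp
  show "let L = \<sigma>\<^sup>2 + 2 * (LINT z:{-\<epsilon>..<0}|\<nu>. z\<^sup>2);
              p = (c - sqrt \<tau> * (measure \<nu> {..<-\<epsilon>} - \<sigma>\<^sup>2 / 2)) / L;
              XW = (\<lambda>x. \<sigma> * W \<tau> x - \<sigma>\<^sup>2 * \<tau> / 2);
              Jm = (\<lambda>x. Jc \<tau> x - \<tau> * (LINT z:{..<0}|\<nu>. exp z - 1 - z))
          in p \<ge> 0 \<and>
             measure M {x \<in> space M. XW x + Jm x \<ge> c * sqrt \<tau>} \<le> exp (- L * p\<^sup>2 / 2)"
    unfolding Let_def using final unfolding p_def L_def a_def s_def I_def rt_def K_def .
qed


end
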